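(* Let $1\to K\to G\xrightarrow{p} Q\to 1$ be an exact sequence of groups (so $p:G\to Q$ is a surjection with kernel $K$), and assume every non-trivial element of $K$ is a generalized torsion element of $G$. Then a non-trivial element $g\in G$ is a generalized torsion element of $G$ if and only if either $p(g)=1$ or $p(g)$ is a generalized torsion element of $Q$.
   Context: For $g,x$ in a group, $g^{x}:=xgx^{-1}$. A non-trivial element $g$ of a group $G$ is a generalized torsion element (of $G$) if there exist a positive integer $n$ and $x_1,\ldots,x_n\in G$ with $g^{x_1}g^{x_2}\cdots g^{x_n}=1$. *)

theory Defs
  imports "HOL-Algebra.Algebra"
begin

definition conjg :: "('a, 'm) monoid_scheme \<Rightarrow> 'a \<Rightarrow> 'a \<Rightarrow> 'a" where
  "conjg G g x = x \<otimes>\<^bsub>G\<^esub> g \<otimes>\<^bsub>G\<^esub> inv\<^bsub>G\<^esub> x"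

definition conj_prod :: "('a, 'm) monoid_scheme \<Rightarrow> 'a \<Rightarrow> 'a list \<Rightarrow> 'a" where
  "conj_prod G g xs = foldr (\<lambda>x acc. conjg G g x \<otimes>\<^bsub>G\<^esub> acc) xs \<one>\<^bsub>G\<^esub>"

definition gen_torsion :: "('a, 'm) monoid_scheme \<Rightarrow> 'a \<Rightarrow> bool" where
  "gen_torsion G g \<longleftrightarrow> g \<in> carrier G \<and> g \<noteq> \<one>\<^bsub>G\<^esub> \<and>
     (\<exists>xs. xs \<noteq> [] \<and> set xs \<subseteq> carrier G \<and> conj_prod G g xs = \<one>\<^bsub>G\<^esub>)"

end

theory Submission
  imports Defs
begin

context group
begin

lemma conjg_closed: "g \<in> carrier G \<Longrightarrow> x \<in> carrier G \<Longrightarrow> conjg G g x \<in> carrier G"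
  by (simp add: conjg_def)

lemma conj_prod_Nil: "conj_prod G g [] = \<one>"
  by (simp add: conj_prod_def)

lemma conj_prod_Cons: "conj_prod G g (x # xs) = conjg G g x \<otimes> conj_prod G g xs"
  by (simp add: conj_prod_def)

lemma conj_prod_closed:
  "g \<in> carrier G \<Longrightarrow> set xs \<subseteq> carrier G \<Longrightarrow> conj_prod G g xs \<in> carrier G"
  by (induction xs) (auto simp: conj_prod_Nil conj_prod_Cons conjg_closed)

lemma conj_prod_append:
  "g \<in> carrier G \<Longrightarrow> set xs \<subseteq> carrier G \<Longrightarrow> set ys \<subseteq> carrier G \<Longrightarrow>
   conj_prod G g (xs @ ys) = conj_prod G g xs \<otimes> conj_prod G g ys"
  by (induction xs) (auto simp: conj_prod_Nil conj_prod_Cons conjg_closed conj_prod_closed m_assoc)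

lemma conjg_mult:
  "a \<in> carrier G \<Longrightarrow> b \<in> carrier G \<Longrightarrow> z \<in> carrier G \<Longrightarrow>
   conjg G (a \<otimes> b) z = conjg G a z \<otimes> conjg G b z"
  by (simp add: conjg_def m_assoc flip: m_assoc[of "inv z" z] )

lemma conjg_conjg:
  "g \<in> carrier G \<Longrightarrow> x \<in> carrier G \<Longrightarrow> z \<in> carrier G \<Longrightarrow>
   conjg G (conjg G g x) z = conjg G g (z \<otimes> x)"
  by (simp add: conjg_def m_assoc inv_mult_group)

lemma conjg_one: "z \<in> carrier G \<Longrightarrow> conjg G \<one> z = \<one>"
  by (simp add: conjg_def)

lemma conjg_conj_prod:
  "g \<in> carrier G \<Longrightarrow> set xs \<subseteq> carrier G \<Longrightarrow> z \<in> carrier G \<Longrightarrow>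
   conjg G (conj_prod G g xs) z = conj_prod G g (map (\<lambda>x. z \<otimes> x) xs)"
  by (induction xs) (auto simp: conj_prod_Nil conj_prod_Cons conjg_one conjg_mult conjg_closed
      conj_prod_closed conjg_conjg)

lemma conj_prod_conj_prod:
  "g \<in> carrier G \<Longrightarrow> set xs \<subseteq> carrier G \<Longrightarrow> set zs \<subseteq> carrier G \<Longrightarrow>
   conj_prod G (conj_prod G g xs) zs = conj_prod G g (concat (map (\<lambda>z. map (\<lambda>x. z \<otimes> x) xs) zs))"
proof (induction zs)
  case Nil
  then show ?case by (simp add: conj_prod_Nil)
next
  case (Cons z zs)
  have s1: "set (map (\<lambda>x. z \<otimes> x) xs) \<subseteq> carrier G" using Cons by auto
  have s2: "set (concat (map (\<lambda>z. map (\<lambda>x. z \<otimes> x) xs) zs)) \<subseteq> carrier G" using Cons by auto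
  show ?case using Cons s1 s2
    by (simp add: conj_prod_Cons conjg_conj_prod conj_prod_append del: set_concat set_map)
qed

end

lemma hom_conj_prod:
  assumes "group_hom G Q p" "g \<in> carrier G" "set xs \<subseteq> carrier G"
  shows "p (conj_prod G g xs) = conj_prod Q (p g) (map p xs)"
  using assms(3)
proof (induction xs)
  case Nil
  then show ?case using assms(1) by (simp add: conj_prod_def group_hom.hom_one)
next
  case (Cons x xs)
  interpret group_hom G Q p by fact
  have c: "conj_prod G g xs \<in> carrier G" using Cons assms(2) G.conj_prod_closed by auto
  show ?case using Cons assms(2) c
    by (simp add: G.conj_prod_Cons H.conj_prod_Cons conjg_def)
qed

lemma lift_list:
  assumes "p ` A = B" "set ys \<subseteq> B"
  shows "\<exists>xs. set xs \<subseteq> A \<and> map p xs = ys"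
  using assms(2)
proof (induction ys)
  case Nil then show ?case by auto
next
  case (Cons y ys)
  then obtain xs where "set xs \<subseteq> A" "map p xs = ys" by auto
  moreover obtain x where "x \<in> A" "p x = y" using Cons.prems assms(1) by auto
  ultimately show ?case by (intro exI[of _ "x # xs"]) auto
qed

theorem theorem1p4:
  fixes G :: "('a, 'm) monoid_scheme" and Q :: "('b, 'n) monoid_scheme"
    and p :: "'a \<Rightarrow> 'b" and g :: 'a
  assumes "group G" and "group Q"
    and "p \<in> hom G Q" and "p ` carrier G = carrier Q"
    and "\<And>k. k \<in> kernel G Q p \<Longrightarrow> k \<noteq> \<one>\<^bsub>G\<^esub> \<Longrightarrow> gen_torsion G k"
    and "g \<in> carrier G" and "g \<noteq> \<one>\<^bsub>G\<^esub>"
  shows "gen_torsion G g \<longleftrightarrow> (p g = \<one>\<^bsub>Q\<^esub> \<or> gen_torsion Q (p g))"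
proof -
  interpret group_hom G Q p using assms(1-3) by (simp add: group_hom_def group_hom_axioms_def)
  have gh: "group_hom G Q p" by unfold_locales
  show ?thesis
  proof
    assume "gen_torsion G g"
    then obtain xs where xs: "xs \<noteq> []" "set xs \<subseteq> carrier G" "conj_prod G g xs = \<one>\<^bsub>G\<^esub>"
      unfolding gen_torsion_def by auto
    have "conj_prod Q (p g) (map p xs) = \<one>\<^bsub>Q\<^esub>"
      using hom_conj_prod[OF gh assms(6) xs(2)] xs(3) by simp
    moreover have "set (map p xs) \<subseteq> carrier Q" using xs(2) by auto
    ultimately show "p g = \<one>\<^bsub>Q\<^esub> \<or> gen_torsion Q (p g)"
      using xs(1) assms(6) unfolding gen_torsion_def by (metis Nil_is_map_conv hom_closed)
  next
    assume h: "p g = \<one>\<^bsub>Q\<^esub> \<or> gen_torsion Q (p g)"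
    show "gen_torsion G g"
    proof (cases "p g = \<one>\<^bsub>Q\<^esub>")
      case True
      then show ?thesis using assms(5)[of g] assms(6,7) by (simp add: kernel_def)
    next
      case False
      then obtain ys where ys: "ys \<noteq> []" "set ys \<subseteq> carrier Q" "conj_prod Q (p g) ys = \<one>\<^bsub>Q\<^esub>"
        using h unfolding gen_torsion_def by auto
      obtain xs where xs: "set xs \<subseteq> carrier G" "map p xs = ys"
        using lift_list[OF assms(4) ys(2)] by auto
      define k where "k = conj_prod G g xs"
      have kc: "k \<in> carrier G" unfolding k_def using xs assms(6) G.conj_prod_closed by auto
      have pk: "p k = \<one>\<^bsub>Q\<^esub>" unfolding k_def
        using hom_conj_prod[OF gh assms(6) xs(1)] xs(2) ys(3) by simp
      have xsne: "xs \<noteq> []" using xs(2) ys(1) by auto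
      show ?thesis
      proof (cases "k = \<one>\<^bsub>G\<^esub>")
        case True
        then show ?thesis using xs xsne assms(6,7) unfolding gen_torsion_def k_def by auto
      next
        case False
        then have "gen_torsion G k" using assms(5)[of k] kc pk by (simp add: kernel_def)
        then obtain zs where zs: "zs \<noteq> []" "set zs \<subseteq> carrier G" "conj_prod G k zs = \<one>\<^bsub>G\<^esub>"
          unfolding gen_torsion_def by auto
        let ?ws = "concat (map (\<lambda>z. map (\<lambda>x. z \<otimes>\<^bsub>G\<^esub> x) xs) zs)"
        have "conj_prod G g ?ws = \<one>\<^bsub>G\<^esub>"
          using G.conj_prod_conj_prod[OF assms(6) xs(1) zs(2)] zs(3) unfolding k_def by simp
        moreover have "set ?ws \<subseteq> carrier G" using xs(1) zs(2) by auto
        moreover have "?ws \<noteq> []" using xsne zs(1) by (cases zs) auto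
        ultimately show ?thesis using assms(6,7) unfolding gen_torsion_def by blast
      qed
    qed
  qed
qed

end
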